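(* Let $\mathcal{F}=(W,R)$ be a frame. Then: (1) $\mathcal{F}\models_{\mathsf{B}^{\Box}}\Box J_2\varphi\to J_2\varphi$ (for all formulas $\varphi$) iff $R$ is reflexive; (2) $\mathcal{F}\models_{\mathsf{B}^{\Box}}\Box J_2\varphi\to\Box\Box J_2\varphi$ iff $R$ is transitive; (3) $\mathcal{F}\models_{\mathsf{B}^{\Box}}\Diamond J_2\varphi\to\Box\Diamond J_2\varphi$ iff $R$ is Euclidean.
   Context: Formulas are built from a countably infinite set of propositional variables and the constants $0,1$ using the unary connectives $\neg$, $J_2$, $\Box$ and the binary connective $\vee$; $\varphi\to\psi:=\neg\varphi\vee\psi$ and $\Diamond\varphi:=\neg\Box\neg\varphi$. Let $\mathbf{WK}^e$ be the algebra on $\{0,\tfrac12,1\}$ with $\neg0=1$, $\neg1=0$, $\neg\tfrac12=\tfrac12$; $a\vee b=\tfrac12$ if $a=\tfrac12$ or $b=\tfrac12$, otherwise $a\vee b=\max(a,b)$; $J_2(1)=1$, $J_2(\tfrac12)=J_2(0)=0$. A frame is a pair $(W,R)$ with $W\neq\emptyset$ and $R\subseteq W\times W$. A Bochvar-Kripke model on $(W,R)$ is $(W,R,v)$ with $v:W\times\mathrm{Fm}\to\{0,\tfrac12,1\}$ such that each $v(w,\cdot)$ commutes with $\neg,\vee,J_2,0,1$ as computed in $\mathbf{WK}^e$, and: $v(w,\Box\varphi)=\tfrac12$ iff $v(w,\varphi)=\tfrac12$; $v(w,\Box\varphi)=1$ iff $v(w,\varphi)\neq\tfrac12$ and $v(s,\varphi)=1$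 for all $s$ with $wRs$; $v(w,\Box\varphi)=0$ iff $v(w,\varphi)\neq\tfrac12$ and $v(s,\varphi)\neq1$ for some $s$ with $wRs$. $\mathcal{F}\models_{\mathsf{B}^{\Box}}\varphi$ means: for every Bochvar-Kripke model $(W,R,v)$ on $\mathcal{F}$ and every $w\in W$, $v(w,\varphi)=1$. $R$ is Euclidean if $wRs$ and $wRt$ imply $sRt$. *)

theory Defs
  imports Main
begin

datatype fm = Var nat | Bot | Top | Neg fm | J2 fm | Box fm | Disj fm fm

definition Imp :: "fm \<Rightarrow> fm \<Rightarrow> fm" where "Imp a b = Disj (Neg a) b"
definition Dia :: "fm \<Rightarrow> fm" where "Dia a = Neg (Box (Neg a))"

datatype wk = T0 | Th | T1  (* 0, 1/2, 1 *)

fun wneg :: "wk \<Rightarrow> wk" where "wneg T0 = T1" | "wneg T1 = T0" | "wneg Th = Th"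
fun wor :: "wk \<Rightarrow> wk \<Rightarrow> wk" where
  "wor Th b = Th" | "wor a Th = Th" | "wor T1 b = T1" | "wor T0 b = b"
fun wJ2 :: "wk \<Rightarrow> wk" where "wJ2 T1 = T1" | "wJ2 Th = T0" | "wJ2 T0 = T0"

definition frame :: "'w set \<Rightarrow> ('w \<times> 'w) set \<Rightarrow> bool" where
  "frame W R \<longleftrightarrow> W \<noteq> {} \<and> R \<subseteq> W \<times> W"

definition bk_model :: "'w set \<Rightarrow> ('w \<times> 'w) set \<Rightarrow> ('w \<Rightarrow> fm \<Rightarrow> wk) \<Rightarrow> bool" where
  "bk_model W R v \<longleftrightarrow> (\<forall>w\<in>W.
      v w Bot = T0 \<and> v w Top = T1 \<and>
      (\<forall>a. v w (Neg a) = wneg (v w a)) \<and>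
      (\<forall>a. v w (J2 a) = wJ2 (v w a)) \<and>
      (\<forall>a b. v w (Disj a b) = wor (v w a) (v w b)) \<and>
      (\<forall>a. (v w (Box a) = Th \<longleftrightarrow> v w a = Th)) \<and>
      (\<forall>a. (v w (Box a) = T1 \<longleftrightarrow> v w a \<noteq> Th \<and> (\<forall>s. (w, s) \<in> R \<longrightarrow> v s a = T1))) \<and>
      (\<forall>a. (v w (Box a) = T0 \<longleftrightarrow> v w a \<noteq> Th \<and> (\<exists>s. (w, s) \<in> R \<and> v s a \<noteq> T1))))"

definition frame_valid :: "'w set \<Rightarrow> ('w \<times> 'w) set \<Rightarrow> fm \<Rightarrow> bool" where
  "frame_valid W R \<phi> \<longleftrightarrow> (\<forall>v. bk_model W R v \<longrightarrow> (\<forall>w\<in>W. v w \<phi> = T1))"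

definition euclidean :: "('w \<times> 'w) set \<Rightarrow> bool" where
  "euclidean R \<longleftrightarrow> (\<forall>w s t. (w, s) \<in> R \<and> (w, t) \<in> R \<longrightarrow> (s, t) \<in> R)"

end

theory Submission
  imports Defs
begin

primrec ev :: "('w \<Rightarrow> nat \<Rightarrow> wk) \<Rightarrow> ('w \<times> 'w) set \<Rightarrow> fm \<Rightarrow> 'w \<Rightarrow> wk" where
  "ev V R (Var n) = (\<lambda>w. V w n)"
| "ev V R Bot = (\<lambda>w. T0)"
| "ev V R Top = (\<lambda>w. T1)"
| "ev V R (Neg a) = (\<lambda>w. wneg (ev V R a w))"
| "ev V R (J2 a) = (\<lambda>w. wJ2 (ev V R a w))"
| "ev V R (Disj a b) = (\<lambda>w. wor (ev V R a w) (ev V R b w))"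
| "ev V R (Box a) = (\<lambda>w. if ev V R a w = Th then Th
      else if (\<forall>s. (w, s) \<in> R \<longrightarrow> ev V R a s = T1) then T1 else T0)"

lemma ev_model: "bk_model W R (\<lambda>w f. ev V R f w)"
  unfolding bk_model_def by auto

lemma wJ2_nh: "wJ2 x \<noteq> Th" by (cases x) auto
lemma wJ2_1: "(wJ2 x = T1) = (x = T1)" by (cases x) auto

lemma boxbiv:
  assumes m: "bk_model W R v" and f: "frame W R" and w: "w \<in> W"
    and b: "\<forall>u\<in>W. v u b \<noteq> Th"
  shows "v w (Box b) = (if \<forall>s. (w, s) \<in> R \<longrightarrow> v s b = T1 then T1 else T0)"
proof -
  have "v w (Box b) \<noteq> Th" using m w b unfolding bk_model_def by blast
  moreover have "v w (Box b) = T1 \<longleftrightarrow> (\<forall>s. (w, s) \<in> R \<longrightarrow> v s b = T1)"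
    using m w b unfolding bk_model_def by blast
  ultimately show ?thesis by (cases "v w (Box b)") auto
qed

lemma mJ2: "bk_model W R v \<Longrightarrow> w \<in> W \<Longrightarrow> v w (J2 a) = wJ2 (v w a)"
  unfolding bk_model_def by blast
lemma mNeg: "bk_model W R v \<Longrightarrow> w \<in> W \<Longrightarrow> v w (Neg a) = wneg (v w a)"
  unfolding bk_model_def by blast
lemma mDisj: "bk_model W R v \<Longrightarrow> w \<in> W \<Longrightarrow> v w (Disj a b) = wor (v w a) (v w b)"
  unfolding bk_model_def by blast

lemma frR: "frame W R \<Longrightarrow> (w, s) \<in> R \<Longrightarrow> w \<in> W \<and> s \<in> W"
  unfolding frame_def by blast

lemma ifnh: "(if P then T1 else T0) \<noteq> Th" by auto

lemma keys:
  assumes m: "bk_model W R v" and f: "frame W R" and w: "w \<in> W"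
  shows "v w (J2 a) = (if v w a = T1 then T1 else T0)"
    and "v w (Box (J2 a)) = (if \<forall>s. (w, s) \<in> R \<longrightarrow> v s a = T1 then T1 else T0)"
    and "v w (Box (Box (J2 a))) = (if \<forall>s. (w, s) \<in> R \<longrightarrow> (\<forall>x. (s, x) \<in> R \<longrightarrow> v x a = T1) then T1 else T0)"
    and "v w (Dia (J2 a)) = (if \<exists>s. (w, s) \<in> R \<and> v s a = T1 then T1 else T0)"
    and "v w (Box (Dia (J2 a))) = (if \<forall>s. (w, s) \<in> R \<longrightarrow> (\<exists>x. (s, x) \<in> R \<and> v x a = T1) then T1 else T0)"
proof -
  have J: "\<And>u. u \<in> W \<Longrightarrow> v u (J2 a) = (if v u a = T1 then T1 else T0)"
    using mJ2[OF m] by (metis wJ2.simps wk.exhaust)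
  show "v w (J2 a) = (if v w a = T1 then T1 else T0)" using J w .
  have B: "\<And>u. u \<in> W \<Longrightarrow> v u (Box (J2 a)) = (if \<forall>s. (u, s) \<in> R \<longrightarrow> v s a = T1 then T1 else T0)"
  proof -
    fix u assume u: "u \<in> W"
    have "v u (Box (J2 a)) = (if \<forall>s. (u, s) \<in> R \<longrightarrow> v s (J2 a) = T1 then T1 else T0)"
      by (rule boxbiv[OF m f u]) (simp add: J)
    also have "\<dots> = (if \<forall>s. (u, s) \<in> R \<longrightarrow> v s a = T1 then T1 else T0)"
      using J frR[OF f] u by (smt (verit) wk.distinct)
    finally show "v u (Box (J2 a)) = (if \<forall>s. (u, s) \<in> R \<longrightarrow> v s a = T1 then T1 else T0)" .
  qed
  show "v w (Box (J2 a)) = (if \<forall>s. (w, s) \<in> R \<longrightarrow> v s a = T1 then T1 else T0)" using B w .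
  have "v w (Box (Box (J2 a))) = (if \<forall>s. (w, s) \<in> R \<longrightarrow> v s (Box (J2 a)) = T1 then T1 else T0)"
    by (rule boxbiv[OF m f w]) (simp add: B)
  also have "\<dots> = (if \<forall>s. (w, s) \<in> R \<longrightarrow> (\<forall>x. (s, x) \<in> R \<longrightarrow> v x a = T1) then T1 else T0)"
    using B frR[OF f] w by (smt (verit) wk.distinct)
  finally show "v w (Box (Box (J2 a))) = (if \<forall>s. (w, s) \<in> R \<longrightarrow> (\<forall>x. (s, x) \<in> R \<longrightarrow> v x a = T1) then T1 else T0)" .
  have NJ: "\<And>u. u \<in> W \<Longrightarrow> v u (Neg (J2 a)) = (if v u a = T1 then T0 else T1)"
    using J mNeg[OF m] by simp
  have D: "\<And>u. u \<in> W \<Longrightarrow> v u (Dia (J2 a)) = (if \<exists>s. (u, s) \<in> R \<and> v s a = T1 then T1 else T0)"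
  proof -
    fix u assume u: "u \<in> W"
    have "v u (Box (Neg (J2 a))) = (if \<forall>s. (u, s) \<in> R \<longrightarrow> v s (Neg (J2 a)) = T1 then T1 else T0)"
      by (rule boxbiv[OF m f u]) (simp add: NJ)
    also have "\<dots> = (if \<forall>s. (u, s) \<in> R \<longrightarrow> v s a \<noteq> T1 then T1 else T0)"
      using NJ frR[OF f] u by (smt (verit) wk.distinct)
    finally show "v u (Dia (J2 a)) = (if \<exists>s. (u, s) \<in> R \<and> v s a = T1 then T1 else T0)"
      unfolding Dia_def using mNeg[OF m u] by auto
  qed
  show "v w (Dia (J2 a)) = (if \<exists>s. (w, s) \<in> R \<and> v s a = T1 then T1 else T0)" using D w .
  have "v w (Box (Dia (J2 a))) = (if \<forall>s. (w, s) \<in> R \<longrightarrow> v s (Dia (J2 a)) = T1 then T1 else T0)"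
    by (rule boxbiv[OF m f w]) (simp add: D)
  also have "\<dots> = (if \<forall>s. (w, s) \<in> R \<longrightarrow> (\<exists>x. (s, x) \<in> R \<and> v x a = T1) then T1 else T0)"
    using D frR[OF f] w by (smt (verit) wk.distinct)
  finally show "v w (Box (Dia (J2 a))) = (if \<forall>s. (w, s) \<in> R \<longrightarrow> (\<exists>x. (s, x) \<in> R \<and> v x a = T1) then T1 else T0)" .
qed

lemma impv: "bk_model W R v \<Longrightarrow> w \<in> W \<Longrightarrow> v w (Imp a b) = wor (wneg (v w a)) (v w b)"
  unfolding Imp_def using mDisj mNeg by metis

lemma wor_cases: "wor (wneg (if P then T1 else T0)) (if Q then T1 else T0) = (if P \<longrightarrow> Q then T1 else T0)"
  by (cases P; cases Q) simp_all

lemma if_T1: "((if P then T1 else T0) = T1) = P" by simp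

theorem mainTheorem14:
  fixes W :: "'w set" and R :: "('w \<times> 'w) set"
  assumes "frame W R"
  shows "((\<forall>\<phi>. frame_valid W R (Imp (Box (J2 \<phi>)) (J2 \<phi>))) \<longleftrightarrow> refl_on W R)
       \<and> ((\<forall>\<phi>. frame_valid W R (Imp (Box (J2 \<phi>)) (Box (Box (J2 \<phi>))))) \<longleftrightarrow> trans R)
       \<and> ((\<forall>\<phi>. frame_valid W R (Imp (Dia (J2 \<phi>)) (Box (Dia (J2 \<phi>))))) \<longleftrightarrow> euclidean R)"
proof -
  note f = assms
  have val: "\<And>a b. frame_valid W R (Imp a b) \<longleftrightarrow>
     (\<forall>v. bk_model W R v \<longrightarrow> (\<forall>w\<in>W. wor (wneg (v w a)) (v w b) = T1))"
    unfolding frame_valid_def using impv by metis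
  have RW: "R \<subseteq> W \<times> W" using f unfolding frame_def by blast
  have P1: "(\<forall>\<phi>. frame_valid W R (Imp (Box (J2 \<phi>)) (J2 \<phi>))) \<longleftrightarrow> refl_on W R"
  proof
    assume H: "\<forall>\<phi>. frame_valid W R (Imp (Box (J2 \<phi>)) (J2 \<phi>))"
    show "refl_on W R" unfolding refl_on_def
    proof (intro conjI ballI RW)
      fix w assume w: "w \<in> W"
      define V where "V = (\<lambda>s (n::nat). if (w, s) \<in> R then T1 else T0)"
      have m: "bk_model W R (\<lambda>u f. ev V R f u)" by (rule ev_model)
      have "wor (wneg (ev V R (Box (J2 (Var 0))) w)) (ev V R (J2 (Var 0)) w) = T1"
        using H val m w by blast
      then show "(w, w) \<in> R"
        using keys(1,2)[OF m f w, of "Var 0"] by (auto simp: V_def split: if_splits)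
    qed
  next
    assume r: "refl_on W R"
    show "\<forall>\<phi>. frame_valid W R (Imp (Box (J2 \<phi>)) (J2 \<phi>))"
      unfolding val proof (intro allI impI ballI)
      fix v w a assume m: "bk_model W R v" and w: "w \<in> W"
      show "wor (wneg (v w (Box (J2 a)))) (v w (J2 a)) = T1"
        unfolding keys(1,2)[OF m f w] wor_cases using r w unfolding refl_on_def by auto
    qed
  qed
  have P2: "(\<forall>\<phi>. frame_valid W R (Imp (Box (J2 \<phi>)) (Box (Box (J2 \<phi>))))) \<longleftrightarrow> trans R"
  proof
    assume H: "\<forall>\<phi>. frame_valid W R (Imp (Box (J2 \<phi>)) (Box (Box (J2 \<phi>))))"
    show "trans R" unfolding trans_def
    proof (intro allI impI)
      fix w u x assume wu: "(w, u) \<in> R" and ux: "(u, x) \<in> R"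
      have w: "w \<in> W" using wu RW by blast
      define V where "V = (\<lambda>s (n::nat). if (w, s) \<in> R then T1 else T0)"
      have m: "bk_model W R (\<lambda>u f. ev V R f u)" by (rule ev_model)
      have "wor (wneg (ev V R (Box (J2 (Var 0))) w)) (ev V R (Box (Box (J2 (Var 0)))) w) = T1"
        using H val m w by blast
      then show "(w, x) \<in> R"
        using keys(2,3)[OF m f w, of "Var 0"] wu ux by (auto simp: V_def split: if_splits)
    qed
  next
    assume r: "trans R"
    show "\<forall>\<phi>. frame_valid W R (Imp (Box (J2 \<phi>)) (Box (Box (J2 \<phi>))))"
      unfolding val proof (intro allI impI ballI)
      fix v w a assume m: "bk_model W R v" and w: "w \<in> W"
      show "wor (wneg (v w (Box (J2 a)))) (v w (Box (Box (J2 a)))) = T1"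
        unfolding keys(2,3)[OF m f w] wor_cases if_T1
      proof (intro impI allI)
        fix s x assume A: "\<forall>s. (w, s) \<in> R \<longrightarrow> v s a = T1" and ws: "(w, s) \<in> R" and sx: "(s, x) \<in> R"
        have "(w, x) \<in> R" using r ws sx unfolding trans_def by blast
        then show "v x a = T1" using A by blast
      qed
    qed
  qed
  have P3: "(\<forall>\<phi>. frame_valid W R (Imp (Dia (J2 \<phi>)) (Box (Dia (J2 \<phi>))))) \<longleftrightarrow> euclidean R"
  proof
    assume H: "\<forall>\<phi>. frame_valid W R (Imp (Dia (J2 \<phi>)) (Box (Dia (J2 \<phi>))))"
    show "euclidean R" unfolding euclidean_def
    proof (intro allI impI)
      fix w s t assume st: "(w, s) \<in> R \<and> (w, t) \<in> R"
      have w: "w \<in> W" using st RW by blast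
      define V where "V = (\<lambda>x (n::nat). if x = t then T1 else T0)"
      have m: "bk_model W R (\<lambda>u f. ev V R f u)" by (rule ev_model)
      have "wor (wneg (ev V R (Dia (J2 (Var 0))) w)) (ev V R (Box (Dia (J2 (Var 0)))) w) = T1"
        using H val m w by blast
      then show "(s, t) \<in> R"
        using keys(4,5)[OF m f w, of "Var 0"] st by (auto simp: V_def split: if_splits)
    qed
  next
    assume r: "euclidean R"
    show "\<forall>\<phi>. frame_valid W R (Imp (Dia (J2 \<phi>)) (Box (Dia (J2 \<phi>))))"
      unfolding val proof (intro allI impI ballI)
      fix v w a assume m: "bk_model W R v" and w: "w \<in> W"
      show "wor (wneg (v w (Dia (J2 a)))) (v w (Box (Dia (J2 a)))) = T1"
        unfolding keys(4,5)[OF m f w] wor_cases if_T1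
      proof (intro impI allI)
        fix s assume A: "\<exists>s. (w, s) \<in> R \<and> v s a = T1" and ws: "(w, s) \<in> R"
        from A obtain t where wt: "(w, t) \<in> R" and t: "v t a = T1" by blast
        have "(s, t) \<in> R" using r ws wt unfolding euclidean_def by blast
        then show "\<exists>x. (s, x) \<in> R \<and> v x a = T1" using t by blast
      qed
    qed
  qed
  show ?thesis using P1 P2 P3 by blast
qed

end
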